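(* Consider the job set $J$ described in the context with $n\ge2$ and $p_\ell$ sufficiently large. Let $\sigma=(M_1,M_2)$ be a schedule of $J$ with $\omega_1(\sigma)=1$, $\omega_2(\sigma)=0$ and $\ell\in M_1$. Then $\sigma$ can be improved, by a sequence of improving 3-swaps, to a schedule with $\omega_1=0$ and $\omega_2=1$.
   Context: Two identical machines; a schedule $\sigma=(M_1,M_2)$ partitions the jobs into sets processed on machines 1 and 2, with loads $L_i=\sum_{j\in M_i}p_j$ and makespan $\max_iL_i$. Fix $n$ and the job set $J=\{a_i,b_i,c_i:1\le i\le n\}\cup\{\ell\}$ with $p_{a_i}=2^{n+i+1}+2^{i-1}$, $p_{b_i}=2^{n+i}$, $p_{c_i}=2^{n+i-1}+2^{i-1}$, and $p_\ell$ a sufficiently large number. For each $i$ define $\omega_i(\sigma)=0$ if $a_i\in M_1$ and $b_i,c_i\in M_2$; $\omega_i(\sigma)=1$ if $a_i\in M_2$ and $b_i,c_i\in M_1$; and $\omega_i(\sigma)=-1$ otherwise. A 3-swap interchanges the machine assignments of exactly three jobs (some on each machine); it is improving if the makespan strictly decreases. *)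

theory Defs
  imports Main
begin

datatype job = JA nat | JB nat | JC nat | JL

definition jobs :: "nat \<Rightarrow> job set" where
  "jobs n = {JA i | i. 1 \<le> i \<and> i \<le> n} \<union> {JB i | i. 1 \<le> i \<and> i \<le> n}
            \<union> {JC i | i. 1 \<le> i \<and> i \<le> n} \<union> {JL}"

fun ptime :: "nat \<Rightarrow> nat \<Rightarrow> job \<Rightarrow> nat" where
  "ptime n pl (JA i) = 2^(n+i+1) + 2^(i-1)"
| "ptime n pl (JB i) = 2^(n+i)"
| "ptime n pl (JC i) = 2^(n+i-1) + 2^(i-1)"
| "ptime n pl JL = pl"

text \<open>A schedule is represented by the set M1 of jobs on machine 1; M2 = jobs n - M1.\<close>
definition load :: "nat \<Rightarrow> nat \<Rightarrow> job set \<Rightarrow> nat" where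
  "load n pl S = (\<Sum>j\<in>S. ptime n pl j)"

definition makespan :: "nat \<Rightarrow> nat \<Rightarrow> job set \<Rightarrow> nat" where
  "makespan n pl M1 = max (load n pl M1) (load n pl (jobs n - M1))"

definition omega :: "nat \<Rightarrow> job set \<Rightarrow> nat \<Rightarrow> int" where
  "omega n M1 i =
     (if JA i \<in> M1 \<and> JB i \<in> jobs n - M1 \<and> JC i \<in> jobs n - M1 then 0
      else if JA i \<in> jobs n - M1 \<and> JB i \<in> M1 \<and> JC i \<in> M1 then 1
      else -1)"

definition improving_3swap :: "nat \<Rightarrow> nat \<Rightarrow> job set \<Rightarrow> job set \<Rightarrow> bool" where
  "improving_3swap n pl M1 M1' \<longleftrightarrow>
     M1 \<subseteq> jobs n \<and>
     (\<exists>S. S \<subseteq> jobs n \<and> card S = 3 \<and> S \<inter> M1 \<noteq> {} \<and> S - M1 \<noteq> {} \<and>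
          M1' = (M1 - S) \<union> (S - M1)) \<and>
     makespan n pl M1' < makespan n pl M1"

end

theory Submission
  imports Defs
begin

lemma jobs_eq: "jobs n = JA ` {1..n} \<union> JB ` {1..n} \<union> JC ` {1..n} \<union> {JL}"
  unfolding jobs_def by auto

lemma fin_jobs: "finite (jobs n)"
  unfolding jobs_eq by simp

lemma fin_sub: "M \<subseteq> jobs n \<Longrightarrow> finite M"
  using fin_jobs finite_subset by blast

lemma ms_eq:
  assumes "M \<subseteq> jobs n" "JL \<in> M" "pl \<ge> load n 0 (jobs n - {JL})"
  shows "makespan n pl M = load n pl M"
proof -
  have f: "finite M" using assms(1) fin_sub by blast
  have "load n pl (jobs n - M) \<le> load n pl (jobs n - {JL})"
    unfolding load_def using assms fin_jobs by (intro sum_mono2) auto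
  also have "\<dots> = load n 0 (jobs n - {JL})"
    unfolding load_def by (intro sum.cong refl) (case_tac x; simp)
  also have "\<dots> \<le> pl" by fact
  also have "pl \<le> load n pl M"
    unfolding load_def using member_le_sum[OF assms(2) _ f, of "ptime n pl"] by simp
  finally show ?thesis unfolding makespan_def by simp
qed

lemma load_ins: "finite M \<Longrightarrow> x \<notin> M \<Longrightarrow> load n pl (insert x M) = load n pl M + ptime n pl x"
  unfolding load_def by simp

lemma load_rem: "finite M \<Longrightarrow> x \<in> M \<Longrightarrow> load n pl (M - {x}) + ptime n pl x = load n pl M"
  unfolding load_def by (simp add: sum.remove)

lemma main_step:
  fixes n :: nat
  assumes "n \<ge> 2" and pl: "load n 0 (jobs n - {JL}) \<le> pl" and sub: "M1 \<subseteq> jobs n"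
    and o1: "omega n M1 1 = 1" and o2: "omega n M1 2 = 0" and L: "JL \<in> M1"
  shows "\<exists>M1'. (improving_3swap n pl)\<^sup>*\<^sup>* M1 M1' \<and> omega n M1' 1 = 0 \<and> omega n M1' 2 = 1"
proof -
  have inj: "JA 1 \<in> jobs n" "JB 1 \<in> jobs n" "JC 1 \<in> jobs n"
    "JA 2 \<in> jobs n" "JB 2 \<in> jobs n" "JC 2 \<in> jobs n"
    using assms unfolding jobs_def by auto
  have m1: "JA 1 \<notin> M1" "JB 1 \<in> M1" "JC 1 \<in> M1"
    using o1 unfolding omega_def by (auto split: if_splits)
  have m2: "JA 2 \<in> M1" "JB 2 \<notin> M1" "JC 2 \<notin> M1"
    using o2 unfolding omega_def by (auto split: if_splits)
  have f: "finite M1" using sub fin_sub by blast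
  define M2 where "M2 = insert (JA 1) (insert (JB 2) (M1 - {JA 2}))"
  define M3 where "M3 = insert (JC 2) (M2 - {JB 1} - {JC 1})"
  have sub2: "M2 \<subseteq> jobs n" using sub inj unfolding M2_def by auto
  have sub3: "M3 \<subseteq> jobs n" using sub2 inj unfolding M3_def by auto
  have L2: "JL \<in> M2" using L unfolding M2_def by auto
  have L3: "JL \<in> M3" using L2 unfolding M3_def by auto
  have f2: "finite M2" using sub2 fin_sub by blast
  define x where "x = (2::nat)^n"
  have x4: "x \<ge> 4" using assms unfolding x_def
    by (metis power_increasing[of 2 n 2] numeral_le_iff semiring_norm(69) one_le_numeral power2_eq_square
        mult_2 numeral_Bit0) 
  have pA1: "ptime n pl (JA 1) = 4*x+1" unfolding x_def by (simp add: power_add)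
  have pB1: "ptime n pl (JB 1) = 2*x" unfolding x_def by (simp add: power_add)
  have pC1: "ptime n pl (JC 1) = x+1" unfolding x_def by (simp add: power_add)
  have pA2: "ptime n pl (JA 2) = 8*x+2" unfolding x_def by (simp add: power_add)
  have pB2: "ptime n pl (JB 2) = 4*x" unfolding x_def by (simp add: power_add)
  have pC2: "ptime n pl (JC 2) = 2*x+2" unfolding x_def by (simp add: power_add)
  have l2: "load n pl M2 + ptime n pl (JA 2) = load n pl M1 + ptime n pl (JA 1) + ptime n pl (JB 2)"
  proof -
    have a: "load n pl (M1 - {JA 2}) + ptime n pl (JA 2) = load n pl M1"
      using load_rem[OF f m2(1)] .
    show ?thesis unfolding M2_def using f m1 m2 a
      by (simp add: load_ins)
  qed
  have l3: "load n pl M3 + ptime n pl (JB 1) + ptime n pl (JC 1) = load n pl M2 + ptime n pl (JC 2)"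
  proof -
    have b1: "JB 1 \<in> M2" "JC 1 \<in> M2 - {JB 1}" "JC 2 \<notin> M2 - {JB 1} - {JC 1}"
      using m1 m2 unfolding M2_def by auto
    have a: "load n pl (M2 - {JB 1}) + ptime n pl (JB 1) = load n pl M2"
      using load_rem[OF f2 b1(1)] .
    have b: "load n pl (M2 - {JB 1} - {JC 1}) + ptime n pl (JC 1) = load n pl (M2 - {JB 1})"
      using load_rem[OF _ b1(2)] f2 by simp
    show ?thesis unfolding M3_def using f2 b1 a b
      by (simp add: load_ins)
  qed
  have s1: "improving_3swap n pl M1 M2"
    unfolding improving_3swap_def
  proof (intro conjI exI)
    show "M1 \<subseteq> jobs n" by fact
    show "{JA 2, JA 1, JB 2} \<subseteq> jobs n" using inj by auto
    show "card {JA 2, JA 1, JB 2} = 3" by simp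
    show "{JA 2, JA 1, JB 2} \<inter> M1 \<noteq> {}" using m2 by auto
    show "{JA 2, JA 1, JB 2} - M1 \<noteq> {}" using m1 by auto
    show "M2 = M1 - {JA 2, JA 1, JB 2} \<union> ({JA 2, JA 1, JB 2} - M1)"
      using m1 m2 unfolding M2_def by auto
    show "makespan n pl M2 < makespan n pl M1"
      using ms_eq[OF sub L pl] ms_eq[OF sub2 L2 pl] l2 pA1 pA2 pB2 by simp
  qed
  have s2: "improving_3swap n pl M2 M3"
    unfolding improving_3swap_def
  proof (intro conjI exI)
    show "M2 \<subseteq> jobs n" by fact
    show "{JB 1, JC 1, JC 2} \<subseteq> jobs n" using inj by auto
    show "card {JB 1, JC 1, JC 2} = 3" by simp
    show "{JB 1, JC 1, JC 2} \<inter> M2 \<noteq> {}" using m1 unfolding M2_def by auto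
    show "{JB 1, JC 1, JC 2} - M2 \<noteq> {}" using m2 unfolding M2_def by auto
    show "M3 = M2 - {JB 1, JC 1, JC 2} \<union> ({JB 1, JC 1, JC 2} - M2)"
      using m1 m2 unfolding M2_def M3_def by auto
    show "makespan n pl M3 < makespan n pl M2"
      using ms_eq[OF sub2 L2 pl] ms_eq[OF sub3 L3 pl] l3 pB1 pC1 pC2 x4 by simp
  qed
  have "(improving_3swap n pl)\<^sup>*\<^sup>* M1 M3" using s1 s2 by auto
  moreover have "omega n M3 1 = 0" "omega n M3 2 = 1"
    unfolding omega_def M3_def M2_def using inj m1 m2 by auto
  ultimately show "\<exists>M1'. (improving_3swap n pl)\<^sup>*\<^sup>* M1 M1' \<and> omega n M1' 1 = 0 \<and> omega n M1' 2 = 1"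
    by blast
qed


theorem lemma8:
  fixes n :: nat
  assumes "n \<ge> 2"
  shows "\<exists>P. \<forall>pl \<ge> P. \<forall>M1. M1 \<subseteq> jobs n \<and> omega n M1 1 = 1 \<and> omega n M1 2 = 0 \<and> JL \<in> M1 \<longrightarrow>
           (\<exists>M1'. (improving_3swap n pl)\<^sup>*\<^sup>* M1 M1' \<and> omega n M1' 1 = 0 \<and> omega n M1' 2 = 1)"
  using main_step[OF assms] by blast

end
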